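(* Let $\{q_n:n\in\mathbb N\}$ be an enumeration of $\mathbb Q\cap[0,1]$. For $n\in\mathbb N$ let $f_n:[0,1]\to[-1,1]$, $f_n(x)=\sin\frac{1}{x-q_n}$ for $x\ne q_n$ and $f_n(q_n)=0$, and let $f(x)=\sum_{n=1}^\infty 2^{-n}f_n(x)$. Let $X=[0,1]\times[-1,1]$ and $E=\{(x,y)\in X: y=f(x)\}$. Then $E$ is connected, $E$ is an $H_1$-retract of $X$, but $E$ is not a $B_1$-retract of $X$.
   Context: A function $f:X\to Y$ between topological spaces is a Baire-one function if it is the pointwise limit of a sequence of continuous functions $f_n:X\to Y$; it is a Lebesgue-one function if $f^{-1}(F)$ is a $G_\delta$-set in $X$ for every closed $F\subseteq Y$. A subset $E$ of $X$ (with the subspace topology) is a $B_1$-retract (resp. $H_1$-retract) of $X$ if there exists a Baire-one (resp. Lebesgue-one) function $r:X\to E$ with $r(x)=x$ for all $x\in E$. *)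

theory Defs
  imports "HOL-Analysis.Analysis"
begin

definition baire_one_map :: "'a topology \<Rightarrow> 'b topology \<Rightarrow> ('a \<Rightarrow> 'b) \<Rightarrow> bool" where
  "baire_one_map X Y f \<longleftrightarrow>
     (\<exists>g :: nat \<Rightarrow> 'a \<Rightarrow> 'b. (\<forall>n. continuous_map X Y (g n)) \<and>
        (\<forall>x\<in>topspace X. limitin Y (\<lambda>n. g n x) (f x) sequentially))"

definition lebesgue_one_map :: "'a topology \<Rightarrow> 'b topology \<Rightarrow> ('a \<Rightarrow> 'b) \<Rightarrow> bool" where
  "lebesgue_one_map X Y f \<longleftrightarrow>
     f \<in> topspace X \<rightarrow> topspace Y \<and>
     (\<forall>F. closedin Y F \<longrightarrow> gdelta_in X {x \<in> topspace X. f x \<in> F})"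

definition B1_retract :: "'a topology \<Rightarrow> 'a set \<Rightarrow> bool" where
  "B1_retract X E \<longleftrightarrow> E \<subseteq> topspace X \<and>
     (\<exists>r. baire_one_map X (subtopology X E) r \<and> (\<forall>x\<in>E. r x = x))"

definition H1_retract :: "'a topology \<Rightarrow> 'a set \<Rightarrow> bool" where
  "H1_retract X E \<longleftrightarrow> E \<subseteq> topspace X \<and>
     (\<exists>r. lebesgue_one_map X (subtopology X E) r \<and> (\<forall>x\<in>E. r x = x))"

end

theory Submission
  imports Defs
begin


lemma lc_const:
  fixes h :: "real \<Rightarrow> bool"
  assumes "connected J" "a \<in> J" "b \<in> J"
    and loc: "\<And>x. x \<in> J \<Longrightarrow> \<exists>\<delta>>0. \<forall>y\<in>J. \<bar>y - x\<bar> < \<delta> \<longrightarrow> h y = h x"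
  shows "h a = h b"
proof (rule connected_local_const[OF assms(1-3)])
  show "\<forall>a\<in>J. eventually (\<lambda>b. h a = h b) (at a within J)"
  proof
    fix x assume "x \<in> J"
    then obtain \<delta> where "\<delta> > 0" "\<forall>y\<in>J. \<bar>y - x\<bar> < \<delta> \<longrightarrow> h y = h x" using loc by blast
    then show "eventually (\<lambda>b. h x = h b) (at x within J)"
      unfolding eventually_at by (intro exI[of _ \<delta>]) (auto simp: dist_real_def)
  qed
qed

lemma countable_closed_isolated:
  fixes K :: "real set"
  assumes "closed K" "countable K" "K \<noteq> {}"
  shows "\<exists>k\<in>K. \<exists>\<rho>>0. \<forall>y\<in>K. y \<noteq> k \<longrightarrow> \<rho> \<le> \<bar>y - k\<bar>"
proof (rule ccontr)
  assume na: "\<not> ?thesis"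
  have lim: "k islimpt K" if "k \<in> K" for k
    unfolding islimpt_approachable
  proof (intro allI impI)
    fix e :: real assume "e > 0"
    then show "\<exists>x'\<in>K. x' \<noteq> k \<and> dist x' k < e"
      using na that by (force simp: dist_real_def not_le)
  qed
  let ?G = "(\<lambda>k. K - {k}) ` K"
  have "K \<subseteq> closure (\<Inter>?G)"
  proof (rule Baire[OF assms(1)])
    show "countable ?G" using assms(2) by simp
    fix T assume "T \<in> ?G"
    then obtain k where k: "k \<in> K" "T = K - {k}" by auto
    have "openin (top_of_set K) (K - {k})"
      by (simp add: openin_open) (metis Int_Diff inf_top.left_neutral open_Compl Compl_eq_Diff_UNIV closed_singleton Int_commute)
    moreover have "K \<subseteq> closure (K - {k})"
    proof
      fix y assume "y \<in> K"
      show "y \<in> closure (K - {k})"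
      proof (cases "y = k")
        case True
        then have "y islimpt (K - {k})" using lim[OF \<open>y \<in> K\<close>] unfolding islimpt_approachable by blast
        then show ?thesis by (simp add: closure_def)
      next
        case False then have "y \<in> K - {k}" using \<open>y \<in> K\<close> by simp
        then show ?thesis using closure_subset[of "K - {k}"] by (rule subsetD[rotated])
      qed
    qed
    ultimately show "openin (top_of_set K) T \<and> K \<subseteq> closure T" using k by simp
  qed
  moreover have "\<Inter>?G = {}" using assms(3) by auto
  ultimately show False using assms(3) by (metis closure_empty subset_empty)
qed

lemma abstract_const:
  fixes h :: "real \<Rightarrow> bool" and f :: "real \<Rightarrow> real"
  assumes N: "\<And>x. x \<in> {0..1} \<Longrightarrow> \<exists>\<epsilon>>0. \<forall>y\<in>{0..1}. \<bar>y - x\<bar> < \<epsilon> \<and> \<bar>f y - f x\<bar> < \<epsilon> \<longrightarrow> h y = h x"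
    and cont: "\<And>x. x \<in> {0..1} \<Longrightarrow> x \<notin> \<rat> \<Longrightarrow> isCont f x"
    and L: "\<And>x e d. x \<in> {0..1} \<Longrightarrow> 0 < x \<Longrightarrow> e > 0 \<Longrightarrow> d > 0 \<Longrightarrow> \<exists>y\<in>{0..1}. x - d < y \<and> y < x \<and> \<bar>f y - f x\<bar> < e"
    and R: "\<And>x e d. x \<in> {0..1} \<Longrightarrow> x < 1 \<Longrightarrow> e > 0 \<Longrightarrow> d > 0 \<Longrightarrow> \<exists>y\<in>{0..1}. x < y \<and> y < x + d \<and> \<bar>f y - f x\<bar> < e"
    and x: "x \<in> {0..1}"
  shows "h x = h 0"
proof -
  define D where "D = {x\<in>{0..1}. \<exists>\<delta>>0. \<forall>y\<in>{0..1}. \<bar>y - x\<bar> < \<delta> \<longrightarrow> h y = h x}"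
  define K where "K = {0..1::real} - D"
  have irrD: "x \<in> D" if xI: "x \<in> {0..1}" and xQ: "x \<notin> \<rat>" for x
  proof -
    obtain \<epsilon> where \<epsilon>: "\<epsilon>>0" "\<forall>y\<in>{0..1}. \<bar>y - x\<bar> < \<epsilon> \<and> \<bar>f y - f x\<bar> < \<epsilon> \<longrightarrow> h y = h x"
      using N[OF xI] by blast
    obtain \<delta> where \<delta>: "\<delta>>0" "\<forall>y. dist y x < \<delta> \<longrightarrow> dist (f y) (f x) < \<epsilon>"
    proof -
      have "\<forall>\<epsilon>>0. \<exists>\<delta>>0. \<forall>x'. dist x' x < \<delta> \<longrightarrow> dist (f x') (f x) < \<epsilon>"
        using cont[OF xI xQ] by (rule continuous_at_eps_delta[THEN iffD1])
      from this[rule_format, OF \<epsilon>(1)] show ?thesis using that by blast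
    qed
    show "x \<in> D" unfolding D_def
    proof (intro CollectI conjI exI[of _ "min \<epsilon> \<delta>"] ballI impI)
      fix y assume y: "y \<in> {0..1}" "\<bar>y - x\<bar> < min \<epsilon> \<delta>"
      then have "\<bar>f y - f x\<bar> < \<epsilon>" using \<delta>(2) by (simp add: dist_real_def)
      moreover have "\<bar>y - x\<bar> < \<epsilon>" using y(2) by simp
      ultimately show "h y = h x" using \<epsilon>(2) y(1) by blast
    qed (use xI \<epsilon> \<delta> in auto)
  qed
  have KQ: "K \<subseteq> \<rat>"
  proof
    fix y assume "y \<in> K"
    then have "y \<in> {0..1}" "y \<notin> D" using K_def by auto
    then show "y \<in> \<rat>" using irrD by blast
  qed
  have KI: "K \<subseteq> {0..1}" using K_def by auto
  have Kcl: "closed K"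
    unfolding closed_limpt
  proof (intro allI impI)
    fix z assume z: "z islimpt K"
    have zI: "z \<in> {0..1}"
      using islimpt_subset[OF z KI] closed_atLeastAtMost[of 0 1, unfolded closed_limpt] by blast
    show "z \<in> K"
    proof (rule ccontr)
      assume "z \<notin> K" then have "z \<in> D" using zI K_def by auto
      then obtain \<delta> where \<delta>: "\<delta>>0" "\<forall>y\<in>{0..1}. \<bar>y - z\<bar> < \<delta> \<longrightarrow> h y = h z" by (auto simp: D_def)
      obtain y where y: "y \<in> K" "y \<noteq> z" "dist y z < \<delta>/2"
        using z \<delta>(1) unfolding islimpt_approachable by (meson half_gt_zero)
      have yI: "y \<in> {0..1}" using y(1) KI by auto
      have "y \<in> D" unfolding D_def
      proof (intro CollectI conjI exI[of _ "\<delta>/2"] ballI impI)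
        fix w assume w: "w \<in> {0..1}" "\<bar>w - y\<bar> < \<delta>/2"
        have "\<bar>y - z\<bar> < \<delta>/2" using y(3) by (simp add: dist_real_def)
        then have "\<bar>w - z\<bar> < \<delta>" "\<bar>y - z\<bar> < \<delta>" using w(2) by linarith+
        then have "h w = h z" "h y = h z" using \<delta>(2) w(1) yI by blast+
        then show "h w = h y" by simp
      qed (use yI \<delta> in auto)
      then show False using y(1) K_def by auto
    qed
  qed
  have KD: "K = {}"
  proof (rule ccontr)
    assume "K \<noteq> {}"
    have "countable K" using KQ countable_rat countable_subset by blast
    obtain k \<rho> where k: "k \<in> K" "\<rho> > 0" "\<forall>y\<in>K. y \<noteq> k \<longrightarrow> \<rho> \<le> \<bar>y - k\<bar>"
      using countable_closed_isolated[OF Kcl \<open>countable K\<close> \<open>K \<noteq> {}\<close>] by blast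
    have kI: "k \<in> {0..1}" "k \<notin> D" using k(1) K_def by auto
    have nearD: "y \<in> D" if "y \<in> {0..1}" "y \<noteq> k" "\<bar>y - k\<bar> < \<rho>" for y
    proof (rule ccontr)
      assume "y \<notin> D" then have "y \<in> K" using that(1) K_def by simp
      then have "\<rho> \<le> \<bar>y - k\<bar>" using k(3) that(2) by blast
      then show False using that(3) by linarith
    qed
    have locJ: "\<exists>\<delta>>0. \<forall>w\<in>J. \<bar>w - y\<bar> < \<delta> \<longrightarrow> h w = h y"
      if "J \<subseteq> {0..1}" "y \<in> J" "y \<noteq> k" "\<bar>y - k\<bar> < \<rho>" for J y
    proof -
      have "y \<in> D" using nearD that by auto
      then show ?thesis using that(1) unfolding D_def by blast
    qed
    obtain \<epsilon> where \<epsilon>: "\<epsilon>>0" "\<forall>y\<in>{0..1}. \<bar>y - k\<bar> < \<epsilon> \<and> \<bar>f y - f k\<bar> < \<epsilon> \<longrightarrow> h y = h k"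
      using N[OF kI(1)] by blast
    have left: "h y = h k" if "y\<in>{0..1}" "k - \<rho> < y" "y < k" for y
    proof -
      let ?J = "{k-\<rho> <..< k} \<inter> {0..1}"
      have yJ: "y \<in> ?J" using that by auto
      have k0: "0 < k" using that by auto
      have dpos: "0 < min (min \<rho> k) \<epsilon>" using \<epsilon>(1) k(2) k0 by simp
      obtain y' where y': "y' \<in> {0..1}" "k - min (min \<rho> k) \<epsilon> < y'" "y' < k" "\<bar>f y' - f k\<bar> < \<epsilon>"
        using L[OF kI(1) k0 \<epsilon>(1) dpos] by blast
      have m1: "min (min \<rho> k) \<epsilon> \<le> \<rho>" "min (min \<rho> k) \<epsilon> \<le> k" "min (min \<rho> k) \<epsilon> \<le> \<epsilon>" by auto
      have y'J: "y' \<in> ?J" using y' m1 by simp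
      have "\<bar>y' - k\<bar> < \<epsilon>" using y'(2,3) m1 by linarith
      then have "h y' = h k" using \<epsilon>(2) y'(1,4) by blast
      moreover have "h y = h y'"
      proof (rule lc_const[of ?J])
        show "connected ?J" by (intro convex_connected convex_Int) auto
        fix x assume "x \<in> ?J"
        then show "\<exists>\<delta>>0. \<forall>y\<in>?J. \<bar>y - x\<bar> < \<delta> \<longrightarrow> h y = h x"
          using kI(1) by (intro locJ) auto
      qed (use yJ y'J in auto)
      ultimately show ?thesis by simp
    qed
    have right: "h y = h k" if "y\<in>{0..1}" "k < y" "y < k + \<rho>" for y
    proof -
      let ?J = "{k <..< k+\<rho>} \<inter> {0..1}"
      have yJ: "y \<in> ?J" using that by auto
      have k1: "k < 1" using that by auto
      have dpos: "0 < min (min \<rho> (1 - k)) \<epsilon>" using \<epsilon>(1) k(2) k1 by simp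
      obtain y' where y': "y' \<in> {0..1}" "k < y'" "y' < k + min (min \<rho> (1 - k)) \<epsilon>" "\<bar>f y' - f k\<bar> < \<epsilon>"
        using R[OF kI(1) k1 \<epsilon>(1) dpos] by blast
      have m1: "min (min \<rho> (1-k)) \<epsilon> \<le> \<rho>" "min (min \<rho> (1-k)) \<epsilon> \<le> 1-k" "min (min \<rho> (1-k)) \<epsilon> \<le> \<epsilon>" by auto
      have y'J: "y' \<in> ?J" using y' m1 by simp
      have "\<bar>y' - k\<bar> < \<epsilon>" using y'(2,3) m1 by linarith
      then have "h y' = h k" using \<epsilon>(2) y'(1,4) by blast
      moreover have "h y = h y'"
      proof (rule lc_const[of ?J])
        show "connected ?J" by (intro convex_connected convex_Int) auto
        fix x assume "x \<in> ?J"
        then show "\<exists>\<delta>>0. \<forall>y\<in>?J. \<bar>y - x\<bar> < \<delta> \<longrightarrow> h y = h x"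
          using kI(1) by (intro locJ) auto
      qed (use yJ y'J in auto)
      ultimately show ?thesis by simp
    qed
    have "k \<in> D" unfolding D_def
    proof (intro CollectI conjI exI[of _ \<rho>] ballI impI)
      fix y assume "y \<in> {0..1}" "\<bar>y - k\<bar> < \<rho>"
      then show "h y = h k"
      proof (cases y k rule: linorder_cases)
        case less then show ?thesis using left[of y] \<open>y \<in> {0..1}\<close> \<open>\<bar>y - k\<bar> < \<rho>\<close> by linarith
      next
        case greater then show ?thesis using right[of y] \<open>y \<in> {0..1}\<close> \<open>\<bar>y - k\<bar> < \<rho>\<close> by linarith
      qed simp
    qed (use kI k(2) in auto)
    then show False using kI by simp
  qed
  have "h x = h 0"
  proof (rule lc_const[of "{0..1}"])
    fix y assume "y \<in> {0..(1::real)}"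
    then have "y \<in> D" using KD K_def by auto
    then show "\<exists>\<delta>>0. \<forall>w\<in>{0..1}. \<bar>w - y\<bar> < \<delta> \<longrightarrow> h w = h y" unfolding D_def by blast
  qed (use x in auto)
  then show ?thesis .
qed

lemma graph_connected:
  fixes f :: "real \<Rightarrow> real"
  assumes cont: "\<And>x. x \<in> {0..1} \<Longrightarrow> x \<notin> \<rat> \<Longrightarrow> isCont f x"
    and L: "\<And>x e d. x \<in> {0..1} \<Longrightarrow> 0 < x \<Longrightarrow> e > 0 \<Longrightarrow> d > 0 \<Longrightarrow> \<exists>y\<in>{0..1}. x - d < y \<and> y < x \<and> \<bar>f y - f x\<bar> < e"
    and R: "\<And>x e d. x \<in> {0..1} \<Longrightarrow> x < 1 \<Longrightarrow> e > 0 \<Longrightarrow> d > 0 \<Longrightarrow> \<exists>y\<in>{0..1}. x < y \<and> y < x + d \<and> \<bar>f y - f x\<bar> < e"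
  shows "connected ((\<lambda>x. (x, f x)) ` {0..1})"
proof (rule connectedI)
  fix A B :: "(real \<times> real) set"
  let ?S = "(\<lambda>x. (x, f x)) ` {0..1}"
  assume A: "open A" and B: "open B" and AS: "A \<inter> ?S \<noteq> {}" and BS: "B \<inter> ?S \<noteq> {}"
    and AB: "A \<inter> B \<inter> ?S = {}" and SAB: "?S \<subseteq> A \<union> B"
  define h where "h x = ((x, f x) \<in> A)" for x
  have close: "dist (y, f y) (x, f x) < e" if "\<bar>y - x\<bar> < e/2" "\<bar>f y - f x\<bar> < e/2" for x y e
    unfolding dist_Pair_Pair using that by (intro sqrt_sum_squares_half_less) (auto simp: dist_real_def)
  have N: "\<exists>\<epsilon>>0. \<forall>y\<in>{0..1}. \<bar>y - x\<bar> < \<epsilon> \<and> \<bar>f y - f x\<bar> < \<epsilon> \<longrightarrow> h y = h x" if x: "x \<in> {0..1}" for x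
  proof (cases "(x, f x) \<in> A")
    case True
    then obtain e where e: "e > 0" "ball (x, f x) e \<subseteq> A" using A open_contains_ball by blast
    show ?thesis
    proof (intro exI[of _ "e/2"] conjI ballI impI)
      fix y assume "y \<in> {0..1}" "\<bar>y - x\<bar> < e/2 \<and> \<bar>f y - f x\<bar> < e/2"
      then have "(y, f y) \<in> A" using close[of y x e] e by (auto simp: dist_commute)
      then show "h y = h x" using True by (simp add: h_def)
    qed (use e in auto)
  next
    case False
    have "(x, f x) \<in> ?S" using x by auto
    then have xB: "(x, f x) \<in> B" using SAB False by blast
    then obtain e where e: "e > 0" "ball (x, f x) e \<subseteq> B" using B open_contains_ball by blast
    show ?thesis
    proof (intro exI[of _ "e/2"] conjI ballI impI)
      fix y assume y: "y \<in> {0..1}" "\<bar>y - x\<bar> < e/2 \<and> \<bar>f y - f x\<bar> < e/2"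
      then have "(y, f y) \<in> B" using close[of y x e] e by (auto simp: dist_commute)
      moreover have "(y, f y) \<in> ?S" using y by auto
      ultimately have "(y, f y) \<notin> A" using AB by blast
      then show "h y = h x" using False by (simp add: h_def)
    qed (use e in auto)
  qed
  have const: "h x = h 0" if "x \<in> {0..1}" for x
    by (rule abstract_const[OF N cont L R that]) auto
  show False
  proof (cases "h 0")
    case True
    then have "?S \<subseteq> A" using const by (auto simp: h_def)
    then show False using AB BS by blast
  next
    case False
    then have "?S \<inter> A = {}" using const by (auto simp: h_def)
    then show False using AS by blast
  qed
qed


lemma isCont_suminf_bound:
  fixes u :: "nat \<Rightarrow> real \<Rightarrow> real"
  assumes "\<And>m y. \<bar>u m y\<bar> \<le> M m" "summable M" "\<And>m. isCont (u m) x0"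
  shows "isCont (\<lambda>y. \<Sum>m. u m y) x0"
proof -
  have ul: "uniform_limit UNIV (\<lambda>n y. \<Sum>i<n. u i y) (\<lambda>y. \<Sum>i. u i y) sequentially"
    by (rule Weierstrass_m_test) (use assms in auto)
  have "\<forall>\<^sub>F n in sequentially. ((\<lambda>y. \<Sum>i<n. u i y) \<longlongrightarrow> (\<Sum>i<n. u i x0)) (at x0 within UNIV)"
    using assms(3) by (intro always_eventually allI tendsto_sum) (simp add: isCont_def)
  moreover have "((\<lambda>n. \<Sum>i<n. u i x0) \<longlongrightarrow> (\<Sum>i. u i x0)) sequentially"
  proof -
    have "summable (\<lambda>i. u i x0)"
      by (rule summable_comparison_test'[OF assms(2), where N=0]) (use assms(1) in auto)
    then show ?thesis by (simp add: summable_LIMSEQ)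
  qed
  ultimately have "((\<lambda>y. \<Sum>i. u i y) \<longlongrightarrow> (\<Sum>i. u i x0)) (at x0 within UNIV)"
    using ul by (intro swap_uniform_limit) auto
  then show ?thesis by (simp add: isCont_def)
qed

context
  fixes q :: "nat \<Rightarrow> real" and fn :: "nat \<Rightarrow> real \<Rightarrow> real" and f :: "real \<Rightarrow> real"
  assumes q_enum: "bij_betw q {1..} (\<rat> \<inter> {0..1})"
    and fn_def: "\<And>n x. fn n x = (if x = q n then 0 else sin (1 / (x - q n)))"
    and f_def: "\<And>x. f x = (\<Sum>n. (1/2) ^ (n + 1) * fn (n + 1) x)"
begin

lemma fn_bound: "\<bar>fn n x\<bar> \<le> 1"
  by (simp add: fn_def)

lemma geo_summable: "summable (\<lambda>n. (1/2::real) ^ (n + 1))"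
  by (simp add: summable_geometric)

lemma geo_sum: "(\<Sum>n. (1/2::real) ^ (n + 1)) = 1"
proof -
  have "(\<lambda>n. (1/2::real)^n) sums 2" using geometric_sums[of "1/2::real"] by simp
  then have "(\<lambda>n. (1/2) * (1/2::real)^n) sums ((1/2) * 2)" by (rule sums_mult)
  then have "(\<lambda>n. (1/2::real)^(n+1)) sums 1" by simp
  then show ?thesis by (simp add: sums_iff)
qed

lemma term_bound: "\<bar>(1/2::real) ^ (n + 1) * fn (n + 1) x\<bar> \<le> (1/2) ^ (n + 1)"
  using fn_bound[of "n+1" x] by (simp add: abs_mult mult_left_le)

lemma terms_summable: "summable (\<lambda>n. (1/2::real) ^ (n + 1) * fn (n + 1) x)"
  by (rule summable_comparison_test'[OF geo_summable, where N=0]) (use term_bound in auto)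

lemma abs_terms_summable: "summable (\<lambda>n. \<bar>(1/2::real) ^ (n + 1) * fn (n + 1) x\<bar>)"
  apply (rule summable_comparison_test'[OF geo_summable, where N=0])
  subgoal for n using term_bound[of n x] by simp
  done

lemma f_bound: "\<bar>f x\<bar> \<le> 1"
proof -
  have "\<bar>f x\<bar> \<le> (\<Sum>n. \<bar>(1/2::real) ^ (n + 1) * fn (n + 1) x\<bar>)"
    unfolding f_def by (rule summable_rabs) (rule abs_terms_summable)
  also have "\<dots> \<le> (\<Sum>n. (1/2::real) ^ (n + 1))"
    by (intro suminf_le term_bound abs_terms_summable geo_summable)
  finally show ?thesis using geo_sum by simp
qed

lemma q_rat: "n \<ge> 1 \<Longrightarrow> q n \<in> \<rat> \<inter> {0..1}"
  using q_enum by (auto simp: bij_betw_def)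

lemma q_inj: "n \<ge> 1 \<Longrightarrow> m \<ge> 1 \<Longrightarrow> q n = q m \<Longrightarrow> n = m"
  using q_enum by (auto simp: bij_betw_def inj_on_def)

lemma q_surj: "x \<in> \<rat> \<Longrightarrow> x \<in> {0..1} \<Longrightarrow> \<exists>n\<ge>1. q n = x"
proof -
  assume "x \<in> \<rat>" "x \<in> {0..1}"
  then have "x \<in> q ` {1..}" using q_enum by (auto simp: bij_betw_def)
  then show ?thesis by auto
qed

lemma fn_cont: "x \<noteq> q n \<Longrightarrow> isCont (fn n) x"
proof -
  assume "x \<noteq> q n"
  have ev: "eventually (\<lambda>y. y \<noteq> q n) (nhds x)"
    using eventually_nhds_in_open[of "UNIV - {q n}" x] \<open>x \<noteq> q n\<close> by auto
  have "isCont (fn n) x \<longleftrightarrow> isCont (\<lambda>y. sin (1 / (y - q n))) x"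
    by (rule isCont_cong) (use ev in \<open>auto simp: fn_def elim!: eventually_mono\<close>)
  moreover have "isCont (\<lambda>y. sin (1 / (y - q n))) x"
    using \<open>x \<noteq> q n\<close> by (intro continuous_intros) auto
  ultimately show ?thesis by simp
qed

lemma f_eq: "f = (\<lambda>y. \<Sum>m. (1/2::real) ^ (m + 1) * fn (m + 1) y)"
  using f_def by auto

lemma f_cont_irr: "x \<notin> \<rat> \<inter> {0..1} \<Longrightarrow> isCont f x"
proof -
  assume x: "x \<notin> \<rat> \<inter> {0..1}"
  have "isCont (\<lambda>y. \<Sum>m. (1/2::real) ^ (m + 1) * fn (m + 1) y) x"
  proof (rule isCont_suminf_bound[OF term_bound geo_summable])
    fix m
    have "x \<noteq> q (m+1)" using q_rat[of "m+1"] x by auto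
    then show "isCont (\<lambda>y. (1/2::real) ^ (m + 1) * fn (m + 1) y) x"
      by (intro continuous_intros fn_cont)
  qed
  then show ?thesis by (simp add: f_eq)
qed

definition gk :: "nat \<Rightarrow> real \<Rightarrow> real" where
  "gk k y = (\<Sum>m. (if m + 1 = k then 0 else (1/2::real) ^ (m + 1) * fn (m + 1) y))"

lemma gk_bound: "\<bar>(if m + 1 = k then 0 else (1/2::real) ^ (m + 1) * fn (m + 1) y)\<bar> \<le> (1/2) ^ (m + 1)"
  using term_bound[of m y] by auto

lemma gk_cont: "k \<ge> 1 \<Longrightarrow> isCont (gk k) (q k)"
proof -
  assume k: "k \<ge> 1"
  have "isCont (\<lambda>y. \<Sum>m. (if m + 1 = k then 0 else (1/2::real) ^ (m + 1) * fn (m + 1) y)) (q k)"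
  proof (rule isCont_suminf_bound[OF gk_bound geo_summable])
    fix m
    show "isCont (\<lambda>y. if m + 1 = k then 0 else (1/2::real) ^ (m + 1) * fn (m + 1) y) (q k)"
    proof (cases "m + 1 = k")
      case True then show ?thesis by simp
    next
      case False
      then have "q k \<noteq> q (m+1)" using q_inj[of k "m+1"] k by auto
      then have "isCont (\<lambda>y. (1/2::real) ^ (m + 1) * fn (m + 1) y) (q k)"
        by (intro continuous_intros fn_cont)
      then show ?thesis using False by simp
    qed
  qed
  then show ?thesis unfolding gk_def[abs_def] .
qed

lemma f_split: "k \<ge> 1 \<Longrightarrow> f y = gk k y + (1/2) ^ k * fn k y"
proof -
  assume k: "k \<ge> 1"
  have s1: "summable (\<lambda>m. (if m + 1 = k then 0 else (1/2::real) ^ (m + 1) * fn (m + 1) y))"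
    by (rule summable_comparison_test'[OF geo_summable, where N=0]) (use gk_bound in simp)
  have s2: "(\<lambda>m. if m = k - 1 then (1/2::real) ^ (m + 1) * fn (m + 1) y else 0) sums ((1/2::real) ^ (k - 1 + 1) * fn (k - 1 + 1) y)"
    by (rule sums_single)
  have eq: "(\<lambda>m. (1/2::real) ^ (m + 1) * fn (m + 1) y) = (\<lambda>m. (if m + 1 = k then 0 else (1/2::real) ^ (m + 1) * fn (m + 1) y) + (if m = k - 1 then (1/2::real) ^ (m + 1) * fn (m + 1) y else 0))"
    using k by (auto simp: fun_eq_iff)
  have "f y = (\<Sum>m. (if m + 1 = k then 0 else (1/2::real) ^ (m + 1) * fn (m + 1) y) + (if m = k - 1 then (1/2::real) ^ (m + 1) * fn (m + 1) y else 0))"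
    by (subst eq[symmetric]) (simp add: f_def)
  also have "\<dots> = gk k y + (1/2::real) ^ (k - 1 + 1) * fn (k - 1 + 1) y"
    unfolding gk_def using suminf_add[OF s1 sums_summable[OF s2]] sums_unique[OF s2] by simp
  finally show ?thesis using k by simp
qed

lemma seq0: "(\<lambda>j. inverse (real (Suc j)) / pi) \<longlonglongrightarrow> 0"
  using tendsto_divide[OF LIMSEQ_inverse_real_of_nat tendsto_const[of pi]] by simp

lemma local_rep: "\<exists>g. isCont g x \<and> g x = f x \<and> (\<forall>j. g (x - inverse (real (Suc j)) / pi) = f (x - inverse (real (Suc j)) / pi)
     \<and> g (x + inverse (real (Suc j)) / pi) = f (x + inverse (real (Suc j)) / pi))"
proof (cases "x \<in> \<rat> \<and> x \<in> {0..1}")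
  case False
  then show ?thesis using f_cont_irr[of x] by (intro exI[of _ f]) auto
next
  case True
  then obtain k where k: "k \<ge> 1" "q k = x" using q_surj by blast
  have "fn k (x - inverse (real (Suc j)) / pi) = 0" for j
  proof -
    have "1 / (x - inverse (real (Suc j)) / pi - q k) = - (real (Suc j) * pi)"
      using k by (simp add: field_simps)
    then show ?thesis by (simp add: fn_def del: of_nat_Suc)
  qed
  moreover have "fn k (x + inverse (real (Suc j)) / pi) = 0" for j
  proof -
    have "1 / (x + inverse (real (Suc j)) / pi - q k) = real (Suc j) * pi"
      using k by (simp add: field_simps)
    then show ?thesis by (simp add: fn_def del: of_nat_Suc)
  qed
  moreover have "fn k x = 0" using k by (simp add: fn_def)
  ultimately show ?thesis using k gk_cont[of k] f_split[OF k(1)]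
    by (intro exI[of _ "gk k"]) auto
qed


lemma rep_limits:
  "((\<lambda>j. f (x - inverse (real (Suc j)) / pi)) \<longlongrightarrow> f x) sequentially \<and>
   ((\<lambda>j. f (x + inverse (real (Suc j)) / pi)) \<longlongrightarrow> f x) sequentially"
proof -
  obtain g where g: "isCont g x" "g x = f x"
    "\<And>j. g (x - inverse (real (Suc j)) / pi) = f (x - inverse (real (Suc j)) / pi)"
    "\<And>j. g (x + inverse (real (Suc j)) / pi) = f (x + inverse (real (Suc j)) / pi)"
    using local_rep[of x] by blast
  have l1: "(\<lambda>j. x - inverse (real (Suc j)) / pi) \<longlonglongrightarrow> x"
    using tendsto_diff[OF tendsto_const[of x] seq0] by simp
  have l2: "(\<lambda>j. x + inverse (real (Suc j)) / pi) \<longlonglongrightarrow> x"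
    using tendsto_add[OF tendsto_const[of x] seq0] by simp
  show ?thesis
    using isCont_tendsto_compose[OF g(1) l1] isCont_tendsto_compose[OF g(1) l2] g(2-4) by simp
qed

lemma approach_left:
  assumes "x \<in> {0..1}" "0 < x" "e > 0" "d > 0"
  shows "\<exists>y\<in>{0..1}. x - d < y \<and> y < x \<and> \<bar>f y - f x\<bar> < e"
proof -
  let ?s = "\<lambda>j. inverse (real (Suc j)) / pi"
  have "eventually (\<lambda>j. dist (f (x - ?s j)) (f x) < e) sequentially"
    using rep_limits[of x] assms(3) by (auto dest: tendstoD)
  moreover have "eventually (\<lambda>j. ?s j < min d x) sequentially"
    using seq0 assms by (intro order_tendstoD(2)) auto
  ultimately have "eventually (\<lambda>j. dist (f (x - ?s j)) (f x) < e \<and> ?s j < min d x) sequentially"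
    by (rule eventually_conj)
  then obtain j where j: "dist (f (x - ?s j)) (f x) < e" "?s j < min d x"
    by (auto simp: eventually_sequentially)
  have p: "0 < ?s j" by simp
  have "x - ?s j \<in> {0..1}" using p j(2) assms(1) unfolding atLeastAtMost_iff min_less_iff_conj by linarith
  moreover have "x - d < x - ?s j \<and> x - ?s j < x" using p j(2) unfolding min_less_iff_conj by linarith
  ultimately show ?thesis
    using j(1) by (intro bexI[of _ "x - ?s j"]) (auto simp: dist_real_def simp del: of_nat_Suc)
qed

lemma approach_right:
  assumes "x \<in> {0..1}" "x < 1" "e > 0" "d > 0"
  shows "\<exists>y\<in>{0..1}. x < y \<and> y < x + d \<and> \<bar>f y - f x\<bar> < e"
proof -
  let ?s = "\<lambda>j. inverse (real (Suc j)) / pi"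
  have "eventually (\<lambda>j. dist (f (x + ?s j)) (f x) < e) sequentially"
    using rep_limits[of x] assms(3) by (auto dest: tendstoD)
  moreover have "eventually (\<lambda>j. ?s j < min d (1 - x)) sequentially"
    using seq0 assms by (intro order_tendstoD(2)) auto
  ultimately have "eventually (\<lambda>j. dist (f (x + ?s j)) (f x) < e \<and> ?s j < min d (1 - x)) sequentially"
    by (rule eventually_conj)
  then obtain j where j: "dist (f (x + ?s j)) (f x) < e" "?s j < min d (1 - x)"
    by (auto simp: eventually_sequentially)
  have p: "0 < ?s j" by simp
  have "x + ?s j \<in> {0..1}" using p j(2) assms(1) unfolding atLeastAtMost_iff min_less_iff_conj by linarith
  moreover have "x < x + ?s j \<and> x + ?s j < x + d" using p j(2) unfolding min_less_iff_conj by linarith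
  ultimately show ?thesis
    using j(1) by (intro bexI[of _ "x + ?s j"]) (auto simp: dist_real_def simp del: of_nat_Suc)
qed

lemma disc_seq:
  assumes k: "k \<ge> 1"
  shows "(\<lambda>j. inverse (pi/2 + 2 * real j * pi)) \<longlonglongrightarrow> 0"
    and "\<And>j. inverse (pi/2 + 2 * real j * pi) > 0"
    and "(\<lambda>j. f (q k + inverse (pi/2 + 2 * real j * pi))) \<longlonglongrightarrow> f (q k) + (1/2)^k"
proof -
  let ?t = "\<lambda>j. inverse (pi/2 + 2 * real j * pi)"
  show pos: "?t j > 0" for j using pi_gt3 by (simp add: add_pos_nonneg)
  have le: "?t j \<le> inverse (real (Suc j))" for j
  proof -
    have a: "0 \<le> real j * (2*pi - 1)" using pi_gt3 by (intro mult_nonneg_nonneg) auto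
    have "real (Suc j) \<le> pi/2 + 2 * real j * pi" using a pi_gt3 by (auto simp: algebra_simps)
    then show ?thesis by (intro le_imp_inverse_le) auto
  qed
  show t0: "?t \<longlonglongrightarrow> 0"
    by (rule tendsto_sandwich[of "\<lambda>_. 0" _ sequentially "\<lambda>j. inverse (real (Suc j))"])
       (use pos le LIMSEQ_inverse_real_of_nat in \<open>auto intro: always_eventually less_imp_le\<close>)
  have fnk: "fn k (q k + ?t j) = 1" for j
  proof -
    have "1 / (q k + ?t j - q k) = pi/2 + 2 * real j * pi" by (simp add: field_simps)
    moreover have "sin (pi/2 + 2 * real j * pi) = 1" by (simp add: sin_add)
    ultimately show ?thesis using pos[of j] by (simp add: fn_def)
  qed
  have l: "(\<lambda>j. q k + ?t j) \<longlonglongrightarrow> q k"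
    using tendsto_add[OF tendsto_const[of "q k"] t0] by simp
  have "(\<lambda>j. gk k (q k + ?t j) + (1/2)^k) \<longlonglongrightarrow> gk k (q k) + (1/2)^k"
    by (intro tendsto_intros isCont_tendsto_compose[OF gk_cont[OF k] l])
  moreover have "f (q k + ?t j) = gk k (q k + ?t j) + (1/2)^k" for j
    using f_split[OF k, of "q k + ?t j"] fnk[of j] by simp
  moreover have "f (q k) = gk k (q k)"
    using f_split[OF k, of "q k"] by (simp add: fn_def)
  ultimately show "(\<lambda>j. f (q k + ?t j)) \<longlonglongrightarrow> f (q k) + (1/2)^k" by simp
qed

lemma E_conn: "connected ((\<lambda>x. (x, f x)) ` {0..1})"
  by (rule graph_connected) (auto intro: f_cont_irr approach_left approach_right)

lemma graph_in_X: "(\<lambda>x. (x, f x)) ` {0..1} \<subseteq> {0..1} \<times> {-1..1}"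
  using f_bound by (auto simp: abs_le_iff)

lemma H1_part: "H1_retract (top_of_set ({0..1} \<times> {-1..1})) ((\<lambda>x. (x, f x)) ` {0..1})"
proof -
  let ?X = "{0..1::real} \<times> {-1..1::real}"
  let ?E = "(\<lambda>x. (x, f x)) ` {0..1::real}"
  let ?r = "\<lambda>p::real\<times>real. (fst p, f (fst p))"
  have EX: "?E \<subseteq> ?X" by (rule graph_in_X)
  have rE: "?r p \<in> ?E" if "p \<in> ?X" for p using that by auto
  have sub: "subtopology (top_of_set ?X) ?E = top_of_set ?E"
    using EX by (simp add: subtopology_subtopology Int_absorb1 inf.absorb2)
  have "lebesgue_one_map (top_of_set ?X) (subtopology (top_of_set ?X) ?E) ?r"
    unfolding lebesgue_one_map_def sub
  proof (intro conjI allI impI)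
    show "?r \<in> topspace (top_of_set ?X) \<rightarrow> topspace (top_of_set ?E)" using rE by auto
    fix F assume "closedin (top_of_set ?E) F"
    then obtain T where T: "closed T" "F = ?E \<inter> T" by (auto simp: closedin_closed)
    define S where "S = {p \<in> ?X. ?r p \<in> T}"
    have S_eq: "{x \<in> topspace (top_of_set ?X). ?r x \<in> F} = S"
      using rE T(2) by (auto simp: S_def)
    define Rq where "Rq = (\<lambda>c. ?X \<inter> ({c} \<times> UNIV)) ` {c \<in> \<rat> \<inter> {0..1}. (c, f c) \<notin> T}"
    have S_eq2: "S = (?X \<inter> closure S) - \<Union>Rq"
    proof
      show "S \<subseteq> ?X \<inter> closure S - \<Union>Rq"
      proof
        fix p assume pS: "p \<in> S"
        then have pX: "p \<in> ?X" and pT: "?r p \<in> T" by (auto simp: S_def)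
        have "p \<in> closure S" using pS closure_subset by blast
        moreover have "p \<notin> \<Union>Rq"
        proof
          assume "p \<in> \<Union>Rq"
          then obtain U where "U \<in> Rq" "p \<in> U" by blast
          then obtain c where "(c, f c) \<notin> T" "p \<in> ({c} \<times> UNIV)" unfolding Rq_def by blast
          then show False using pT by (cases p) simp
        qed
        ultimately show "p \<in> ?X \<inter> closure S - \<Union>Rq" using pX by simp
      qed
    next
      show "?X \<inter> closure S - \<Union>Rq \<subseteq> S"
      proof
        fix p assume p: "p \<in> ?X \<inter> closure S - \<Union>Rq"
        then have pX: "p \<in> ?X" and pc: "p \<in> closure S" by auto
        show "p \<in> S"
        proof (cases "fst p \<in> \<rat>")
          case True
          have "(fst p, f (fst p)) \<in> T"
          proof (rule ccontr)
            assume "(fst p, f (fst p)) \<notin> T"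
            then have "?X \<inter> ({fst p} \<times> UNIV) \<in> Rq" using True pX by (auto simp: Rq_def)
            moreover have "p \<in> ?X \<inter> ({fst p} \<times> UNIV)" using pX by (cases p) auto
            ultimately show False using p by blast
          qed
          then show ?thesis using pX by (simp add: S_def)
        next
          case False
          obtain s where s: "\<And>n. s n \<in> S" "s \<longlonglongrightarrow> p" using pc unfolding closure_sequential by blast
          have c: "isCont f (fst p)" using False by (intro f_cont_irr) auto
          have t1: "(\<lambda>n. fst (s n)) \<longlonglongrightarrow> fst p" using tendsto_fst[OF s(2)] .
          have t2: "(\<lambda>n. f (fst (s n))) \<longlonglongrightarrow> f (fst p)" using isCont_tendsto_compose[OF c t1] .
          have t3: "(\<lambda>n. ?r (s n)) \<longlonglongrightarrow> ?r p" using tendsto_Pair[OF t1 t2] .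
          have "?r (s n) \<in> T" for n using s(1)[of n] by (simp add: S_def)
          then have "?r p \<in> T" using closed_sequentially[OF T(1) _ t3] by blast
          then show ?thesis using pX by (simp add: S_def)
        qed
      qed
    qed
    have met: "metrizable_space (top_of_set ?X)"
      by (intro metrizable_space_subtopology metrizable_space_euclidean)
    have g1: "gdelta_in (top_of_set ?X) (?X \<inter> closure S)"
      by (intro closed_imp_gdelta_in[OF met] closedin_closed_Int closed_closure)
    have cntR: "countable Rq"
    proof -
      have "countable {c \<in> \<rat> \<inter> {0..1::real}. (c, f c) \<notin> T}"
        by (rule countable_subset[OF _ countable_rat]) auto
      then show ?thesis unfolding Rq_def by simp
    qed
    have f1: "fsigma_in (top_of_set ?X) (\<Union>Rq)"
    proof (rule fsigma_in_Union[OF cntR])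
      fix U assume "U \<in> Rq"
      then obtain c where "U = ?X \<inter> ({c} \<times> UNIV)" by (auto simp: Rq_def)
      moreover have "closed ({c} \<times> (UNIV::real set))" by (intro closed_Times) auto
      ultimately show "fsigma_in (top_of_set ?X) U"
        by (simp add: closed_imp_fsigma_in closedin_closed_Int)
    qed
    show "gdelta_in (top_of_set ?X) {x \<in> topspace (top_of_set ?X). ?r x \<in> F}"
      unfolding S_eq by (subst S_eq2) (rule gdelta_in_diff[OF g1 f1])
  qed
  moreover have "\<forall>x\<in>?E. ?r x = x" by auto
  ultimately show ?thesis unfolding H1_retract_def using EX by auto
qed

lemma notB1_part: "\<not> B1_retract (top_of_set ({0..1} \<times> {-1..1})) ((\<lambda>x. (x, f x)) ` {0..1})"
proof
  let ?X = "{0..1::real} \<times> {-1..1::real}"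
  let ?E = "(\<lambda>x. (x, f x)) ` {0..1::real}"
  assume "B1_retract (top_of_set ?X) ?E"
  then obtain r where r1: "baire_one_map (top_of_set ?X) (subtopology (top_of_set ?X) ?E) r"
     and rid': "\<forall>x\<in>?E. r x = x"
    unfolding B1_retract_def by blast
  then obtain g where g': "\<forall>n. continuous_map (top_of_set ?X) (subtopology (top_of_set ?X) ?E) (g n)"
     and lim': "\<forall>x\<in>topspace (top_of_set ?X). limitin (subtopology (top_of_set ?X) ?E) (\<lambda>n. g n x) (r x) sequentially"
    unfolding baire_one_map_def by blast
  have g: "\<And>n. continuous_map (top_of_set ?X) (subtopology (top_of_set ?X) ?E) (g n)" using g' by blast
  have lim: "\<And>x. x \<in> ?X \<Longrightarrow> limitin (subtopology (top_of_set ?X) ?E) (\<lambda>n. g n x) (r x) sequentially"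
    using lim' unfolding topspace_euclidean_subtopology by blast
  have rid: "\<And>x. x \<in> ?E \<Longrightarrow> r x = x" using rid' by blast
  have EX: "?E \<subseteq> ?X" by (rule graph_in_X)
  have sub: "subtopology (top_of_set ?X) ?E = top_of_set ?E"
    using EX by (simp add: subtopology_subtopology Int_absorb1 inf.absorb2)
  have Xcomp: "compact ?X" by (intro compact_Times compact_Icc)
  have Xconn: "connected ?X" by (intro convex_connected convex_Times) auto
  have const: "g n p = g n (0,0)" if pX: "p \<in> ?X" for n p
  proof -
    have gc: "continuous_on ?X (g n)" and gE: "g n ` ?X \<subseteq> ?E"
      using g[of n] unfolding sub by (auto simp: Pi_iff)
    let ?C = "g n ` ?X"
    have Ccl: "closed ?C" by (intro compact_imp_closed compact_continuous_image[OF gc Xcomp])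
    have Cconn: "connected ?C" by (rule connected_continuous_image[OF gc Xconn])
    have Pconn: "connected (fst ` ?C)"
      by (rule connected_continuous_image[OF _ Cconn]) (intro continuous_on_fst continuous_on_id)
    have inC: "c = (fst c, f (fst c))" if "c \<in> ?C" for c using that gE by auto
    have no_lt: False if ab: "a \<in> fst ` ?C" "b \<in> fst ` ?C" "a < b" for a b
    proof -
      have "fst ` ?C \<subseteq> fst ` ?E" using gE by (rule image_mono)
      also have "fst ` ?E = {0..1}" by (simp add: image_image)
      finally have PI: "fst ` ?C \<subseteq> {0..1}" .
      have "b \<in> {0..1}" using PI ab(2) by (rule subsetD)
      then have bI: "b \<le> 1" by simp
      have "a \<in> {0..1}" using PI ab(1) by (rule subsetD)
      then have aI: "0 \<le> a" by simp
      obtain c' where c': "c' \<in> \<rat>" "a < c'" "c' < b" using Rats_dense_in_real[OF ab(3)] by blast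
      obtain k where k: "k \<ge> 1" "q k = c'" using q_surj[OF c'(1)] c' aI bI by auto
      note ds = disc_seq[OF k(1)]
      let ?t = "\<lambda>j. inverse (pi/2 + 2 * real j * pi)"
      have "eventually (\<lambda>j. ?t j < b - q k) sequentially"
        using ds(1) c' k by (intro order_tendstoD(2)) auto
      then obtain N where N: "\<And>j. j \<ge> N \<Longrightarrow> ?t j < b - q k" by (auto simp: eventually_sequentially)
      define z where "z j = (q k + ?t (j + N), f (q k + ?t (j + N)))" for j
      have zC: "z j \<in> ?C" for j
      proof -
        have tp: "?t (j+N) > 0" by (rule ds(2))
        have tb: "?t (j+N) < b - q k" using N[of "j+N"] by simp
        have "q k + ?t (j + N) \<in> {a..b}" using tp tb c'(2) k(2) unfolding atLeastAtMost_iff by linarith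
        then have "q k + ?t (j + N) \<in> fst ` ?C" by (rule subsetD[OF connected_contains_Icc[OF Pconn ab(1,2)]])
        then obtain c where "q k + ?t (j + N) = fst c" "c \<in> ?C" by (rule imageE)
        then show ?thesis using inC[of c] by (simp add: z_def)
      qed
      have t1: "(\<lambda>j. q k + ?t (j + N)) \<longlonglongrightarrow> q k"
        using tendsto_add[OF tendsto_const[of "q k"] LIMSEQ_ignore_initial_segment[OF ds(1), of N]] by simp
      have t2: "(\<lambda>j. f (q k + ?t (j + N))) \<longlonglongrightarrow> f (q k) + (1/2)^k"
        using LIMSEQ_ignore_initial_segment[OF ds(3), of N] .
      have "z \<longlonglongrightarrow> (q k, f (q k) + (1/2)^k)"
        unfolding z_def using tendsto_Pair[OF t1 t2] .
      then have "(q k, f (q k) + (1/2)^k) \<in> ?C" by (rule closed_sequentially[where f=z, OF Ccl zC])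
      then have "f (q k) + (1/2)^k = f (q k)" using inC by fastforce
      then show False by simp
    qed
    have p0X: "(0,0) \<in> ?X" by auto
    have gp: "g n p \<in> ?C" using pX by (rule imageI)
    have g0: "g n (0,0) \<in> ?C" using p0X by (rule imageI)
    have f1: "fst (g n p) \<in> fst ` ?C" using gp by (rule imageI)
    have f0: "fst (g n (0,0)) \<in> fst ` ?C" using g0 by (rule imageI)
    have "fst (g n p) = fst (g n (0,0))"
    proof (cases "fst (g n p)" "fst (g n (0,0))" rule: linorder_cases)
      case less then show ?thesis using no_lt[OF f1 f0] by blast
    next
      case greater then show ?thesis using no_lt[OF f0 f1] by blast
    qed simp
    then have "(fst (g n p), f (fst (g n p))) = (fst (g n (0,0)), f (fst (g n (0,0))))" by simp
    then show ?thesis using inC[OF gp] inC[OF g0] by simp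
  qed
  have tl: "(\<lambda>n. g n (0,0)) \<longlonglongrightarrow> r x" if "x \<in> ?E" for x
  proof -
    have xX: "x \<in> ?X" using that EX by auto
    have "limitin (top_of_set ?E) (\<lambda>n. g n x) (r x) sequentially" using lim[OF xX] unfolding sub .
    then have "(\<lambda>n. g n x) \<longlonglongrightarrow> r x" by (simp add: limitin_subtopology)
    then show ?thesis using const[OF xX] by simp
  qed
  have e0: "(0, f 0) \<in> ?E" and e1: "(1, f 1) \<in> ?E" by auto
  have "r (0, f 0) = r (1, f 1)" using LIMSEQ_unique[OF tl[OF e0] tl[OF e1]] .
  then show False using rid[OF e0] rid[OF e1] by simp
qed

end


theorem mainTheorem9:
  fixes q :: "nat \<Rightarrow> real" and fn :: "nat \<Rightarrow> real \<Rightarrow> real" and f :: "real \<Rightarrow> real"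
    and X E :: "(real \<times> real) set"
  assumes q_enum: "bij_betw q {1..} (\<rat> \<inter> {0..1})"
    and fn_def: "\<And>n x. fn n x = (if x = q n then 0 else sin (1 / (x - q n)))"
    and f_def: "\<And>x. f x = (\<Sum>n. (1/2) ^ (n + 1) * fn (n + 1) x)"
    and X_def: "X = {0..1} \<times> {-1..1}"
    and E_def: "E = {(x, y) \<in> X. y = f x}"
  shows "connected E \<and> H1_retract (top_of_set X) E \<and> \<not> B1_retract (top_of_set X) E"
proof -
  have fb: "\<And>x. \<bar>f x\<bar> \<le> 1" using f_bound[OF q_enum fn_def f_def] .
  have Eeq: "E = (\<lambda>x. (x, f x)) ` {0..1}"
  proof
    show "E \<subseteq> (\<lambda>x. (x, f x)) ` {0..1}" unfolding E_def X_def by auto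
    show "(\<lambda>x. (x, f x)) ` {0..1} \<subseteq> E" unfolding E_def X_def using fb by (auto simp: abs_le_iff)
  qed
  show ?thesis unfolding Eeq X_def
    using E_conn[OF q_enum fn_def f_def] H1_part[OF q_enum fn_def f_def] notB1_part[OF q_enum fn_def f_def]
    by blast
qed

end
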